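(* Let $p$ be a prime and $k\ge 0$ an integer, and let $T_{p,k}:=\{r\in\mathbb{Q}_{>0}: v_p(r)=0,\ v_p(r-1)\le k\}$. Then $$\chi(G(T_{p,k}))\le p^k(p-1).$$
   Context: For $R\subseteq\mathbb{Q}_{>0}\setminus\{1\}$, $G(R)$ is the graph with vertex set $\mathbb{N}=\{1,2,\dots\}$ and edge set $\{\{m,n\}: m/n\in R\}$. $\chi$ denotes chromatic number; $v_p$ is the $p$-adic valuation on $\mathbb{Q}$, $v_p(0)=\infty$. *)

theory Defs
  imports Complex_Main "HOL-Computational_Algebra.Primes" "HOL-Library.Extended_Nat"
begin

text \<open>The value at 0 (which is \<infinity> in the paper)
  is never used: every use below is guarded by a nonzeroness test.\<close>
definition padic_val :: "nat \<Rightarrow> rat \<Rightarrow> int" where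
  "padic_val p r = (case quotient_of r of (a, b) \<Rightarrow>
      int (multiplicity (int p) a) - int (multiplicity (int p) b))"

definition G_adj :: "rat set \<Rightarrow> nat \<Rightarrow> nat \<Rightarrow> bool" where
  "G_adj R m n \<longleftrightarrow> 1 \<le> m \<and> 1 \<le> n \<and>
     (of_nat m / of_nat n \<in> R \<or> of_nat n / of_nat m \<in> R)"

definition chromatic_number :: "'a set \<Rightarrow> ('a \<Rightarrow> 'a \<Rightarrow> bool) \<Rightarrow> enat" where
  "chromatic_number V E = Inf {enat c | c. \<exists>f :: 'a \<Rightarrow> nat.
      (\<forall>v\<in>V. f v < c) \<and> (\<forall>u\<in>V. \<forall>v\<in>V. E u v \<longrightarrow> f u \<noteq> f v)}"

definition chi_G :: "rat set \<Rightarrow> enat" where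
  "chi_G R = chromatic_number {n::nat. 1 \<le> n} (G_adj R)"

text \<open>T_{p,k} = {r \<in> Q_{>0} : v_p(r) = 0, v_p(r-1) \<le> k}, with v_p(0) = \<infinity>
  (so r = 1 is excluded).\<close>
definition T_set :: "nat \<Rightarrow> nat \<Rightarrow> rat set" where
  "T_set p k = {r. 0 < r \<and> padic_val p r = 0 \<and> r \<noteq> 1 \<and> padic_val p (r - 1) \<le> int k}"

end

theory Submission
  imports Defs "HOL-Number_Theory.Totient"
begin

lemma padic_div:
  fixes a b :: int
  assumes p: "prime p" and a: "a \<noteq> 0" and b: "b \<noteq> 0"
  shows "padic_val p (of_int a / of_int b) = int (multiplicity (int p) a) - int (multiplicity (int p) b)"
proof -
  define r :: rat where "r = of_int a / of_int b"
  obtain a' b' where q: "quotient_of r = (a', b')" by (cases "quotient_of r") auto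
  have b'pos: "b' > 0" using quotient_of_denom_pos[OF q] .
  have "r = of_int a' / of_int b'" using quotient_of_div[OF q] .
  hence "(of_int a / of_int b :: rat) = of_int a' / of_int b'" by (simp add: r_def)
  hence "(of_int (a * b') :: rat) = of_int (a' * b)" using b b'pos
    by (simp add: frac_eq_eq)
  hence eq: "a * b' = a' * b" by (simp only: of_int_eq_iff)
  have a': "a' \<noteq> 0" using eq a b'pos by auto
  have pe: "prime_elem (int p)" using p by simp
  have "multiplicity (int p) (a * b') = multiplicity (int p) (a' * b)" using eq by simp
  hence "multiplicity (int p) a + multiplicity (int p) b' = multiplicity (int p) a' + multiplicity (int p) b"
    using prime_elem_multiplicity_mult_distrib[OF pe] a b a' b'pos by simp
  hence "int (multiplicity (int p) a') - int (multiplicity (int p) b') = int (multiplicity (int p) a) - int (multiplicity (int p) b)"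
    by linarith
  thus ?thesis unfolding padic_val_def r_def[symmetric] q by simp
qed

definition col :: "nat \<Rightarrow> nat \<Rightarrow> nat \<Rightarrow> int" where
  "col p k x = (int x div int p ^ multiplicity (int p) (int x)) mod int p ^ (k+1)"

lemma key:
  assumes p: "prime p" and m: "m \<ge> 1" and n: "n \<ge> 1"
    and T: "(of_nat m / of_nat n :: rat) \<in> T_set p k"
  shows "col p k m \<noteq> col p k n"
proof
  assume ceq: "col p k m = col p k n"
  define P where "P = int p"
  have P1: "\<not> is_unit P" using prime_gt_1_nat[OF p] by (simp add: P_def)
  have mi: "int m \<noteq> 0" "int n \<noteq> 0" using m n by auto
  have r: "padic_val p (of_nat m / of_nat n) = int (multiplicity (int p) (int m)) - int (multiplicity (int p) (int n))"
    using padic_div[OF p mi] by simp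
  from T have v0: "padic_val p (of_nat m / of_nat n) = 0" and ne1: "(of_nat m / of_nat n :: rat) \<noteq> 1"
    and vk: "padic_val p (of_nat m / of_nat n - 1) \<le> int k" by (auto simp: T_set_def)
  have "int (multiplicity P (int m)) - int (multiplicity P (int n)) = 0"
    using v0 r by (simp add: P_def)
  hence veq: "multiplicity P (int m) = multiplicity P (int n)" by simp
  define v where "v = multiplicity P (int n)"
  have mn: "int m \<noteq> int n" using ne1 n by auto
  have "(of_nat m / of_nat n - 1 :: rat) = of_int (int m - int n) / of_int (int n)"
    using n by (simp add: field_simps)
  hence "padic_val p (of_nat m / of_nat n - 1) = int (multiplicity P (int m - int n)) - int v"
    using padic_div[OF p _ mi(2), of "int m - int n"] mn by (simp add: P_def v_def)
  with vk have le: "multiplicity P (int m - int n) \<le> v + k" by linarith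
  obtain um where um: "int m = P ^ v * um" "\<not> P dvd um"
    using multiplicity_decompose'[of "int m" P, OF mi(1) P1] veq v_def by metis
  obtain un where un: "int n = P ^ v * un" "\<not> P dvd un"
    using multiplicity_decompose'[of "int n" P, OF mi(2) P1] v_def by metis
  have Pv: "P ^ v \<noteq> 0" using p by (simp add: P_def)
  have "int m div P ^ v = um" using um Pv by simp
  moreover have "int n div P ^ v = un" using un Pv by simp
  ultimately have "um mod P ^ (k+1) = un mod P ^ (k+1)"
    using ceq veq v_def by (simp add: col_def P_def)
  hence "P ^ (k+1) dvd um - un" by (simp add: mod_eq_dvd_iff)
  hence "P ^ v * P ^ (k+1) dvd P ^ v * (um - un)" by simp
  hence "P ^ (v + k + 1) dvd int m - int n" using um un by (simp add: power_add algebra_simps)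
  hence "v + k + 1 \<le> multiplicity P (int m - int n)"
    using multiplicity_geI[of "int m - int n" P] mn P1 by simp
  with le show False by simp
qed

lemma col_tot:
  assumes p: "prime p" and n: "n \<ge> 1"
  shows "nat (col p k n) \<in> totatives (p ^ (k+1))"
proof -
  define P where "P = int p"
  define u where "u = int n div P ^ multiplicity P (int n)"
  have nd: "\<not> P dvd u" unfolding u_def using n prime_gt_1_nat[OF p] by (intro multiplicity_decompose) (auto simp: P_def)
  have Q: "P ^ (k+1) > 0" using p prime_gt_0_nat by (simp add: P_def)
  have c: "col p k n = u mod P ^ (k+1)" by (simp add: col_def u_def P_def)
  have "u = P ^ (k+1) * (u div P ^ (k+1)) + u mod P ^ (k+1)" by simp
  moreover have "P dvd P ^ (k+1) * (u div P ^ (k+1))" by simp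
  ultimately have ndc: "\<not> P dvd (u mod P ^ (k+1))" using nd
    by (metis dvd_add)
  have ge: "u mod P ^ (k+1) \<ge> 0" using Q by simp
  have lt: "u mod P ^ (k+1) < P ^ (k+1)" using Q by simp
  have nz: "u mod P ^ (k+1) \<noteq> 0" using ndc by auto
  define c' where "c' = nat (u mod P ^ (k+1))"
  have ic: "int c' = u mod P ^ (k+1)" using ge by (simp add: c'_def)
  have "\<not> p dvd c'" using ndc ic by (metis P_def int_dvd_int_iff)
  hence "coprime c' p" using p by (meson coprime_commute prime_imp_coprime)
  hence cop: "coprime c' (p ^ (k+1))" by simp
  have "int c' > 0" using ic nz ge by simp
  moreover have "int c' < int (p ^ (k+1))" using ic lt by (simp add: P_def)
  ultimately have "c' > 0" "c' \<le> p ^ (k+1)" by (simp_all only: of_nat_less_iff of_nat_0_less_iff)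
  thus ?thesis using cop c by (simp add: totatives_def c'_def)
qed

theorem proposition2p3:
  fixes p k :: nat
  assumes "prime p"
  shows "chi_G (T_set p k) \<le> enat (p ^ k * (p - 1))"
proof -
  define U where "U = totatives (p ^ (k+1))"
  have cU: "card U = p ^ k * (p - 1)"
    using totient_prime_power_Suc[OF assms, of k] by (simp add: U_def totient_def)
  obtain h where h: "bij_betw h U {0..<card U}"
    using ex_bij_betw_finite_nat[of U] by (auto simp: U_def)
  define f where "f x = h (nat (col p k x))" for x
  have mem: "\<forall>v\<in>{n::nat. 1 \<le> n}. f v < p ^ k * (p - 1)"
  proof
    fix v :: nat assume "v \<in> {n. 1 \<le> n}"
    hence "nat (col p k v) \<in> U" using col_tot[OF assms] by (simp add: U_def)
    thus "f v < p ^ k * (p - 1)" using h cU by (auto simp: f_def bij_betw_def)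
  qed
  have cl: "\<forall>u\<in>{n::nat. 1 \<le> n}. \<forall>v\<in>{n::nat. 1 \<le> n}. G_adj (T_set p k) u v \<longrightarrow> f u \<noteq> f v"
  proof (intro ballI impI)
    fix u v :: nat assume u: "u \<in> {n. 1 \<le> n}" and v: "v \<in> {n. 1 \<le> n}" and e: "G_adj (T_set p k) u v"
    have uU: "nat (col p k u) \<in> U" and vU: "nat (col p k v) \<in> U"
      using col_tot[OF assms] u v by (auto simp: U_def)
    have cu: "col p k u \<ge> 0" "col p k v \<ge> 0"
      using assms prime_gt_0_nat by (simp_all add: col_def)
    have "col p k u \<noteq> col p k v"
      using e key[OF assms, of u v k] key[OF assms, of v u k] u v by (auto simp: G_adj_def)
    hence "nat (col p k u) \<noteq> nat (col p k v)" using cu by simp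
    thus "f u \<noteq> f v" using h uU vU by (auto simp: f_def bij_betw_def inj_on_def)
  qed
  show ?thesis unfolding chi_G_def chromatic_number_def
  proof (rule Inf_lower)
    show "enat (p ^ k * (p - 1)) \<in> {enat c | c. \<exists>f :: nat \<Rightarrow> nat.
      (\<forall>v\<in>{n::nat. 1 \<le> n}. f v < c) \<and> (\<forall>u\<in>{n::nat. 1 \<le> n}. \<forall>v\<in>{n::nat. 1 \<le> n}. G_adj (T_set p k) u v \<longrightarrow> f u \<noteq> f v)}"
      using mem cl by blast
  qed
qed

end
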